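(* There exist universal constants $c,C>0$ such that for every finite, irreducible, reversible Markov chain $(V,P)$ with reversible probability measure $m$, \[ c\,\alpha \le \alpha_{\operatorname{spectral}} \le C\,\alpha . \]
   Context: $V$ is a finite set, $P:V\times V\to[0,\infty)$ has symmetric support, the chain is connected, and $m$ is a probability measure with $m(x)P(x,y)=m(y)P(y,x)$. $\Delta f(x)=\sum_y P(x,y)(f(y)-f(x))$, $\langle f,g\rangle=\sum_x f(x)g(x)m(x)$, $\mathcal E(f,g)=-\langle\Delta f,g\rangle$. For $g\ge0$ with $\sum_x g(x)m(x)=1$, $\operatorname{Ent}(g)=\langle g,\log g\rangle$ (with $0\log 0=0$). The log-Sobolev constant is $\alpha=\inf\{\mathcal E(f,f)/\operatorname{Ent}(f^2): \|f\|_2=1,\ \operatorname{Ent}(f^2)>0\}$. The logarithmic mean is $\theta(s,t)=(s-t)/(\log s-\log t)$ for $s\neq t$, $\theta(s,s)=s$. For nonempty $X\subsetneq V$, $\lambda_X=\inf\{\mathcal E(f,f):\|f\|_2=1,\ f|_{V\setminus X}=0\}$, and $\alpha_{\operatorname{spectral}}=\inf_X\theta(\lambda_X,\lambda_{V\setminus X})$ over nonempty proper subsets $X$. *)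

theory Defs
  imports Complex_Main
begin

text \<open>Vertices are natural numbers; a finite state space is a finite set V of naturals.
  Functions on V are functions nat => real whose values outside V are ignored.\<close>

definition lap :: "nat set \<Rightarrow> (nat \<Rightarrow> nat \<Rightarrow> real) \<Rightarrow> (nat \<Rightarrow> real) \<Rightarrow> nat \<Rightarrow> real" where
  "lap V P f x = (\<Sum>y\<in>V. P x y * (f y - f x))"

definition inner_m :: "nat set \<Rightarrow> (nat \<Rightarrow> real) \<Rightarrow> (nat \<Rightarrow> real) \<Rightarrow> (nat \<Rightarrow> real) \<Rightarrow> real" where
  "inner_m V m f g = (\<Sum>x\<in>V. f x * g x * m x)"

definition dirichlet :: "nat set \<Rightarrow> (nat \<Rightarrow> nat \<Rightarrow> real) \<Rightarrow> (nat \<Rightarrow> real) \<Rightarrow> (nat \<Rightarrow> real) \<Rightarrow> (nat \<Rightarrow> real) \<Rightarrow> real" where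
  "dirichlet V P m f g = - inner_m V m (lap V P f) g"

text \<open>Ent(g) = <g, log g>, with 0 log 0 = 0 (note ln 0 = 0 in Isabelle).\<close>
definition Ent :: "nat set \<Rightarrow> (nat \<Rightarrow> real) \<Rightarrow> (nat \<Rightarrow> real) \<Rightarrow> real" where
  "Ent V m g = (\<Sum>x\<in>V. (if g x = 0 then 0 else g x * ln (g x)) * m x)"

definition log_sobolev :: "nat set \<Rightarrow> (nat \<Rightarrow> nat \<Rightarrow> real) \<Rightarrow> (nat \<Rightarrow> real) \<Rightarrow> real" where
  "log_sobolev V P m = Inf {dirichlet V P m f f / Ent V m (\<lambda>x. (f x)\<^sup>2) | f.
      inner_m V m f f = 1 \<and> Ent V m (\<lambda>x. (f x)\<^sup>2) > 0}"

definition log_mean :: "real \<Rightarrow> real \<Rightarrow> real" where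
  "log_mean s t = (if s = t then s else (s - t) / (ln s - ln t))"

definition dirichlet_eig :: "nat set \<Rightarrow> (nat \<Rightarrow> nat \<Rightarrow> real) \<Rightarrow> (nat \<Rightarrow> real) \<Rightarrow> nat set \<Rightarrow> real" where
  "dirichlet_eig V P m X = Inf {dirichlet V P m f f | f.
      inner_m V m f f = 1 \<and> (\<forall>x\<in>V - X. f x = 0)}"

definition alpha_spectral :: "nat set \<Rightarrow> (nat \<Rightarrow> nat \<Rightarrow> real) \<Rightarrow> (nat \<Rightarrow> real) \<Rightarrow> real" where
  "alpha_spectral V P m = Inf {log_mean (dirichlet_eig V P m X) (dirichlet_eig V P m (V - X)) | X.
      X \<subseteq> V \<and> X \<noteq> {} \<and> X \<noteq> V}"

definition reversible_chain :: "nat set \<Rightarrow> (nat \<Rightarrow> nat \<Rightarrow> real) \<Rightarrow> (nat \<Rightarrow> real) \<Rightarrow> bool" where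
  "reversible_chain V P m \<longleftrightarrow>
     finite V \<and>
     (\<forall>x\<in>V. \<forall>y\<in>V. P x y \<ge> 0) \<and>
     (\<forall>x\<in>V. \<forall>y\<in>V. P x y > 0 \<longleftrightarrow> P y x > 0) \<and>
     (\<forall>x\<in>V. \<forall>y\<in>V. (x, y) \<in> {(a, b). a \<in> V \<and> b \<in> V \<and> P a b > 0}\<^sup>*) \<and>
     (\<forall>x\<in>V. m x \<ge> 0) \<and> (\<Sum>x\<in>V. m x) = 1 \<and>
     (\<forall>x\<in>V. \<forall>y\<in>V. m x * P x y = m y * P y x)"

end

theory Submission
  imports Defs
begin


locale rc =
  fixes V :: "nat set" and P :: "nat \<Rightarrow> nat \<Rightarrow> real" and m :: "nat \<Rightarrow> real"
  assumes rc: "reversible_chain V P m"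
begin

lemma finV: "finite V" using rc unfolding reversible_chain_def by blast
lemma Pnn: "x \<in> V \<Longrightarrow> y \<in> V \<Longrightarrow> P x y \<ge> 0" using rc unfolding reversible_chain_def by blast
lemma Psym: "x \<in> V \<Longrightarrow> y \<in> V \<Longrightarrow> P x y > 0 \<longleftrightarrow> P y x > 0" using rc unfolding reversible_chain_def by blast
lemma msum: "(\<Sum>x\<in>V. m x) = 1" using rc unfolding reversible_chain_def by blast
lemma mnn: "x \<in> V \<Longrightarrow> m x \<ge> 0" using rc unfolding reversible_chain_def by blast
lemma rev: "x \<in> V \<Longrightarrow> y \<in> V \<Longrightarrow> m x * P x y = m y * P y x" using rc unfolding reversible_chain_def by blast
definition "R = {(a, b). a \<in> V \<and> b \<in> V \<and> P a b > 0}"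
lemma conn: "x \<in> V \<Longrightarrow> y \<in> V \<Longrightarrow> (x, y) \<in> R\<^sup>*" using rc unfolding reversible_chain_def R_def by blast

lemma mpos: assumes "x \<in> V" shows "m x > 0"
proof (rule ccontr)
  assume "\<not> m x > 0"
  hence m0: "m x = 0" using mnn[OF assms] by auto
  have "\<forall>y\<in>V. m y = 0"
  proof
    fix y assume y: "y \<in> V"
    have "(x, y) \<in> R\<^sup>*" using conn[OF assms y] .
    then show "m y = 0"
    proof (induction rule: rtrancl_induct)
      case base then show ?case using m0 .
    next
      case (step y z)
      then have yz: "y \<in> V" "z \<in> V" "P y z > 0" unfolding R_def by auto
      have "P z y > 0" using Psym yz by blast
      have "m z * P z y = 0" using rev[OF yz(1,2)] step.IH by simp
      then show ?case using \<open>P z y > 0\<close> by simp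
    qed
  qed
  hence "(\<Sum>x\<in>V. m x) = 0" by simp
  thus False using msum by simp
qed

abbreviation "E f \<equiv> dirichlet V P m f f"
abbreviation "N f \<equiv> inner_m V m f f"

lemma energy: "E f = (\<Sum>x\<in>V. \<Sum>y\<in>V. m x * P x y * (f x - f y)^2) / 2"
proof -
  define S1 where "S1 = (\<Sum>x\<in>V. \<Sum>y\<in>V. m x * P x y * (f x * (f x - f y)))"
  define S2 where "S2 = (\<Sum>x\<in>V. \<Sum>y\<in>V. m x * P x y * (f y * (f y - f x)))"
  have d: "E f = S1"
    unfolding dirichlet_def inner_m_def lap_def S1_def
    by (simp add: sum_distrib_left sum_distrib_right sum_negf[symmetric] algebra_simps)
  have "S2 = (\<Sum>y\<in>V. \<Sum>x\<in>V. m x * P x y * (f y * (f y - f x)))"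
    unfolding S2_def by (rule sum.swap)
  also have "\<dots> = (\<Sum>y\<in>V. \<Sum>x\<in>V. m y * P y x * (f y * (f y - f x)))"
    by (intro sum.cong refl) (simp add: rev)
  finally have s: "S1 = S2" unfolding S1_def by simp
  have "(\<Sum>x\<in>V. \<Sum>y\<in>V. m x * P x y * (f x - f y)^2) = S1 + S2"
    unfolding S1_def S2_def sum.distrib[symmetric]
    by (intro sum.cong refl) (simp add: power2_eq_square algebra_simps)
  thus ?thesis using d s by simp
qed

lemma Q_nn: "x \<in> V \<Longrightarrow> y \<in> V \<Longrightarrow> m x * P x y \<ge> 0"
  using mnn Pnn by simp

lemma E_nn: "E f \<ge> 0"
  unfolding energy by (intro divide_nonneg_pos sum_nonneg mult_nonneg_nonneg Q_nn) auto

lemma E_mono: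
  assumes "\<And>x y. x \<in> V \<Longrightarrow> y \<in> V \<Longrightarrow> (g x - g y)^2 \<le> (f x - f y)^2"
  shows "E g \<le> E f"
  unfolding energy by (intro divide_right_mono sum_mono mult_left_mono Q_nn assms) auto

lemma E_sum_mono:
  assumes "finite J" "\<And>x y. x \<in> V \<Longrightarrow> y \<in> V \<Longrightarrow> (\<Sum>j\<in>J. (g j x - g j y)^2) \<le> (f x - f y)^2"
  shows "(\<Sum>j\<in>J. E (g j)) \<le> E f"
proof -
  have "(\<Sum>j\<in>J. E (g j)) = (\<Sum>x\<in>V. \<Sum>y\<in>V. m x * P x y * (\<Sum>j\<in>J. (g j x - g j y)^2)) / 2"
    unfolding energy sum_divide_distrib[symmetric] sum_distrib_left
    by (subst sum.swap, rule arg_cong[where f="\<lambda>t. t/2"], intro sum.cong refl, rule sum.swap)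
  also have "\<dots> \<le> E f"
    unfolding energy by (intro divide_right_mono sum_mono mult_left_mono Q_nn assms) auto
  finally show ?thesis .
qed

lemma E_scale: "E (\<lambda>x. c * f x) = c^2 * E f"
  unfolding energy by (simp add: sum_distrib_left power2_eq_square algebra_simps)

lemma N_scale: "N (\<lambda>x. c * f x) = c^2 * N f"
  unfolding inner_m_def by (simp add: sum_distrib_left power2_eq_square algebra_simps)

lemma N_nn: "N f \<ge> 0"
  unfolding inner_m_def using mnn by (intro sum_nonneg) simp

end


context rc begin

lemma finR: "finite R"
proof -
  have "R \<subseteq> V \<times> V" unfolding R_def by auto
  thus ?thesis using finV finite_subset by blast
qed

lemma term_le_E: assumes "a \<in> V" "b \<in> V" shows "m a * P a b * (f a - f b)^2 \<le> 2 * E f"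
proof -
  have "m a * P a b * (f a - f b)^2 \<le> (\<Sum>y\<in>V. m a * P a y * (f a - f y)^2)"
    by (rule member_le_sum[OF assms(2)]) (use Q_nn assms finV in auto)
  also have "\<dots> \<le> (\<Sum>x\<in>V. \<Sum>y\<in>V. m x * P x y * (f x - f y)^2)"
    by (rule member_le_sum[OF assms(1)]) (auto intro!: sum_nonneg mult_nonneg_nonneg Q_nn simp: finV)
  finally show ?thesis unfolding energy by simp
qed

lemma pos_bound: "\<exists>K0>0. \<forall>f. (\<exists>z\<in>V. f z = 0) \<longrightarrow> N f \<le> K0 * E f"
proof -
  define Qs where "Qs = ((\<lambda>(a,b). m a * P a b) ` R) \<union> {1}"
  have finQ: "finite Qs" unfolding Qs_def using finR by auto
  define q where "q = Min Qs"
  have qpos: "q > 0" unfolding q_def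
  proof (subst Min_gr_iff)
    show "finite Qs" by (rule finQ)
    show "Qs \<noteq> {}" unfolding Qs_def by auto
    show "\<forall>a\<in>Qs. 0 < a" unfolding Qs_def R_def using mpos by auto
  qed
  have qle: "(a,b) \<in> R \<Longrightarrow> q \<le> m a * P a b" for a b
    unfolding q_def by (rule Min_le[OF finQ]) (auto simp: Qs_def)
  define c where "c = real (card R)"
  define K0 where "K0 = c^2 * 2 / q + 1"
  have K0pos: "K0 > 0" unfolding K0_def using qpos by (intro add_nonneg_pos divide_nonneg_pos) auto
  show ?thesis
  proof (intro exI[of _ K0] conjI allI impI K0pos)
    fix f :: "nat \<Rightarrow> real" assume "\<exists>z\<in>V. f z = 0"
    then obtain z where z: "z \<in> V" "f z = 0" by blast
    define d where "d = sqrt (2 * E f / q)"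
    have dnn: "d \<ge> 0" unfolding d_def using E_nn qpos by simp
    have edge: "\<bar>f a - f b\<bar> \<le> d" if "(a,b) \<in> R" for a b
    proof -
      have ab: "a \<in> V" "b \<in> V" using that unfolding R_def by auto
      have "q * (f a - f b)^2 \<le> m a * P a b * (f a - f b)^2"
        by (rule mult_right_mono[OF qle[OF that]]) simp
      also have "\<dots> \<le> 2 * E f" by (rule term_le_E[OF ab])
      finally have "(f a - f b)^2 \<le> 2 * E f / q" using qpos by (simp add: field_simps)
      hence "sqrt ((f a - f b)^2) \<le> d" unfolding d_def by (rule real_sqrt_le_mono)
      thus ?thesis by simp
    qed
    have pow: "(a,b) \<in> R^^n \<Longrightarrow> \<bar>f a - f b\<bar> \<le> real n * d" for n a b
    proof (induction n arbitrary: b)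
      case 0 thus ?case by simp
    next
      case (Suc n)
      then obtain y where y: "(a,y) \<in> R^^n" "(y,b) \<in> R" by auto
      have "\<bar>f a - f b\<bar> \<le> \<bar>f a - f y\<bar> + \<bar>f y - f b\<bar>" by simp
      also have "\<dots> \<le> real n * d + d" using Suc.IH[OF y(1)] edge[OF y(2)] by simp
      finally show ?case by (simp add: algebra_simps)
    qed
    have pt: "(f x)^2 \<le> c^2 * (2 * E f / q)" if x: "x \<in> V" for x
    proof -
      have "(z, x) \<in> R\<^sup>*" by (rule conn[OF z(1) x])
      then obtain n where n: "n \<le> card R" "(z,x) \<in> R^^n"
        using rtrancl_finite_eq_relpow[OF finR] by auto
      have "\<bar>f x\<bar> \<le> real n * d" using pow[OF n(2)] z by simp
      also have "\<dots> \<le> c * d" unfolding c_def using n(1) dnn by (intro mult_right_mono) auto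
      finally have "\<bar>f x\<bar> \<le> c * d" .
      hence "\<bar>f x\<bar>^2 \<le> (c*d)^2" by (intro power_mono) auto
      thus ?thesis unfolding d_def using E_nn qpos by (simp add: power_mult_distrib)
    qed
    have "N f \<le> (\<Sum>x\<in>V. (c^2 * (2 * E f / q)) * m x)"
      unfolding inner_m_def
      by (intro sum_mono mult_right_mono) (use pt mnn in \<open>auto simp: power2_eq_square\<close>)
    also have "\<dots> = c^2 * (2 * E f / q)" by (simp only: sum_distrib_left[symmetric] msum)
    also have "\<dots> \<le> K0 * E f" unfolding K0_def using E_nn by (simp add: algebra_simps)
    finally show "N f \<le> K0 * E f" .
  qed
qed

end


context rc begin
abbreviation "lam X \<equiv> dirichlet_eig V P m X"
lemma lam_set_bdd: "bdd_below {E f | f. N f = 1 \<and> (\<forall>x\<in>V - X. f x = 0)}"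
  by (rule bdd_belowI[of _ 0]) (auto intro: E_nn)
lemma lam_lower:
  assumes "\<forall>x\<in>V - X. f x = 0" "N f > 0"
  shows "lam X \<le> E f / N f"
proof -
  define g where "g = (\<lambda>x. (1 / sqrt (N f)) * f x)"
  have Ng: "N g = 1" unfolding g_def N_scale using assms(2) by (simp add: power_divide)
  have Eg: "E g = E f / N f" unfolding g_def E_scale using assms(2) by (simp add: power_divide)
  have "lam X \<le> E g" unfolding dirichlet_eig_def
  proof (rule cInf_lower[OF _ lam_set_bdd])
    have "\<forall>x\<in>V - X. g x = 0" using assms(1) unfolding g_def by simp
    thus "E g \<in> {E f | f. N f = 1 \<and> (\<forall>x\<in>V - X. f x = 0)}" using Ng by blast
  qed
  thus ?thesis using Eg by simp
qed

lemma ind_N: assumes "x \<in> V" shows "N (\<lambda>y. if y = x then 1 / sqrt (m x) else 0) = 1"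
proof -
  have "N (\<lambda>y. if y = x then 1 / sqrt (m x) else 0) = (\<Sum>y\<in>V. if y = x then 1 else 0)"
    unfolding inner_m_def
  proof (intro sum.cong refl)
    fix y assume "y \<in> V"
    have mp: "m x > 0" using mpos[OF assms] .
    have "1 / sqrt (m x) * (1 / sqrt (m x)) * m x = 1"
      using mp by (simp add: real_sqrt_mult[symmetric] field_simps del: real_sqrt_mult)
    thus "(if y = x then 1 / sqrt (m x) else 0) * (if y = x then 1 / sqrt (m x) else 0) * m y = (if y = x then 1 else 0)"
      by simp
  qed
  also have "\<dots> = 1" using assms finV by simp
  finally show ?thesis .
qed

lemma lam_set_ne: assumes "X \<subseteq> V" "X \<noteq> {}"
  shows "{E f | f. N f = 1 \<and> (\<forall>x\<in>V - X. f x = 0)} \<noteq> {}"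
proof -
  obtain x where x: "x \<in> X" using assms by blast
  hence "x \<in> V" using assms by auto
  define g where "g = (\<lambda>y. if y = x then 1 / sqrt (m x) else 0)"
  have g1: "N g = 1" unfolding g_def by (rule ind_N) fact
  have g2: "\<forall>y\<in>V - X. g y = 0" using x by (auto simp: g_def)
  have "E g \<in> {E f | f. N f = 1 \<and> (\<forall>x\<in>V - X. f x = 0)}" using g1 g2 by blast
  thus ?thesis by blast
qed

lemma lam_ge:
  assumes "X \<subseteq> V" "X \<noteq> {}" "\<And>f. N f = 1 \<Longrightarrow> \<forall>x\<in>V - X. f x = 0 \<Longrightarrow> c \<le> E f"
  shows "c \<le> lam X"
  unfolding dirichlet_eig_def
proof (rule cInf_greatest[OF lam_set_ne[OF assms(1,2)]])
  fix y assume "y \<in> {E f | f. N f = 1 \<and> (\<forall>x\<in>V - X. f x = 0)}"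
  then obtain f where f: "y = E f" "N f = 1" "\<forall>x\<in>V - X. f x = 0" by blast
  show "c \<le> y" unfolding f(1) by (rule assms(3)[OF f(2,3)])
qed

lemma lam_pos: assumes "X \<subseteq> V" "X \<noteq> {}" "X \<noteq> V" shows "lam X > 0"
proof -
  obtain K0 where K0: "K0 > 0" "\<And>f. (\<exists>z\<in>V. f z = 0) \<Longrightarrow> N f \<le> K0 * E f"
    using pos_bound by blast
  obtain z where z: "z \<in> V" "z \<notin> X" using assms by blast
  have "1 / K0 \<le> lam X"
  proof (rule lam_ge[OF assms(1,2)])
    fix f assume "N f = 1" "\<forall>x\<in>V - X. f x = 0"
    hence "1 \<le> K0 * E f" using K0(2)[of f] z by auto
    thus "1 / K0 \<le> E f" using K0(1) by (simp add: field_simps)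
  qed
  thus ?thesis using K0(1) by (meson less_le_trans divide_pos_pos zero_less_one)
qed

lemma jensen:
  assumes X: "X \<subseteq> V" and N1: "N phi = 1" and z: "\<forall>x\<in>V - X. phi x = 0"
  shows "- ln (sum m X) \<le> Ent V m (\<lambda>x. (phi x)\<^sup>2)"
proof -
  define M where "M = sum m X"
  have finX: "finite X" using X finV finite_subset by blast
  have Xne: "X \<noteq> {}"
  proof
    assume "X = {}"
    hence "N phi = 0" using z unfolding inner_m_def by simp
    thus False using N1 by simp
  qed
  have Mpos: "M > 0" unfolding M_def using finX Xne mpos X by (intro sum_pos) auto
  have pt: "(if (phi x)\<^sup>2 = 0 then 0 else (phi x)\<^sup>2 * ln ((phi x)\<^sup>2)) * m x + (phi x)\<^sup>2 * m x * ln M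
      \<ge> (if phi x = 0 then 0 else (phi x)\<^sup>2 * m x - m x / M)" if x: "x \<in> V" for x
  proof (cases "phi x = 0")
    case True thus ?thesis by simp
  next
    case False
    define y where "y = (phi x)\<^sup>2 * M"
    have ypos: "y > 0" unfolding y_def using False Mpos by simp
    have "ln (1 / y) \<le> 1 / y - 1" by (rule ln_le_minus_one) (use ypos in simp)
    hence l: "1 - 1 / y \<le> ln y" using ypos by (simp add: ln_div)
    have "ln y = ln ((phi x)\<^sup>2) + ln M" unfolding y_def using False Mpos by (simp add: ln_mult)
    hence "(phi x)\<^sup>2 * (1 - 1 / y) \<le> (phi x)\<^sup>2 * (ln ((phi x)\<^sup>2) + ln M)"
      using l by (intro mult_left_mono) auto
    moreover have "(phi x)\<^sup>2 * (1 - 1 / y) = (phi x)\<^sup>2 - 1 / M"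
      unfolding y_def using False Mpos by (simp add: field_simps)
    ultimately have "(phi x)\<^sup>2 - 1 / M \<le> (phi x)\<^sup>2 * (ln ((phi x)\<^sup>2) + ln M)" by simp
    hence "((phi x)\<^sup>2 - 1 / M) * m x \<le> ((phi x)\<^sup>2 * (ln ((phi x)\<^sup>2) + ln M)) * m x"
      using mnn[OF x] by (intro mult_right_mono) auto
    thus ?thesis using False by (simp add: algebra_simps)
  qed
  have split: "(\<Sum>x\<in>V. if phi x = 0 then 0 else (phi x)\<^sup>2 * m x - m x / M)
      = (\<Sum>x\<in>V. (phi x)\<^sup>2 * m x) - (\<Sum>x\<in>V. if phi x = 0 then 0 else m x / M)"
    by (subst sum_subtractf[symmetric]) (auto intro!: sum.cong)
  have one: "(\<Sum>x\<in>V. (phi x)\<^sup>2 * m x) = 1" using N1 unfolding inner_m_def by (simp add: power2_eq_square)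
  have "(\<Sum>x\<in>V. if phi x = 0 then 0 else m x / M) \<le> (\<Sum>x\<in>V. if x \<in> X then m x / M else 0)"
    using z mnn Mpos by (intro sum_mono) auto
  also have "\<dots> = (\<Sum>x\<in>X. m x / M)" using X finV
    by (simp add: sum.If_cases Int_absorb1)
  also have "\<dots> = 1" unfolding sum_divide_distrib[symmetric] M_def using Mpos M_def by simp
  finally have "(\<Sum>x\<in>V. if phi x = 0 then 0 else m x / M) \<le> 1" .
  hence rhs: "0 \<le> (\<Sum>x\<in>V. if phi x = 0 then 0 else (phi x)\<^sup>2 * m x - m x / M)"
    unfolding split one by simp
  also have "\<dots> \<le> (\<Sum>x\<in>V. (if (phi x)\<^sup>2 = 0 then 0 else (phi x)\<^sup>2 * ln ((phi x)\<^sup>2)) * m x + (phi x)\<^sup>2 * m x * ln M)"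
    by (intro sum_mono pt)
  also have "\<dots> = Ent V m (\<lambda>x. (phi x)\<^sup>2) + ln M"
    unfolding Ent_def sum.distrib sum_distrib_right[symmetric]
    using one by simp
  finally show ?thesis unfolding M_def by simp
qed

end



lemma ln2_gt: "ln (2::real) > 1/2"
proof -
  have "exp (1/2::real) * exp (1/2) = exp 1" by (simp add: exp_add[symmetric])
  hence "exp (1/2::real) ^ 2 < 2 ^ 2" using exp_le by (simp add: power2_eq_square)
  hence "exp (1/2::real) < 2" by (rule power_less_imp_less_base) simp
  hence "ln (exp (1/2::real)) < ln 2" by (subst ln_less_cancel_iff) auto
  thus ?thesis by simp
qed

lemma lm_sym: "log_mean a b = log_mean b a"
proof (cases "a = b")
  case True thus ?thesis by simp
next
  case False
  have "(b - a)/(ln b - ln a) = (-(a-b))/(-(ln a - ln b))" by simp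
  also have "\<dots> = (a-b)/(ln a - ln b)" by (rule minus_divide_divide)
  finally show ?thesis unfolding log_mean_def using False by simp
qed

lemma lm_lt: assumes "0 < a" "a < b"
  shows "log_mean a b = (b - a) / (ln b - ln a)" "a \<le> log_mean a b" "log_mean a b \<le> b"
proof -
  have l: "ln b - ln a > 0" using assms by simp
  show e: "log_mean a b = (b - a) / (ln b - ln a)" using lm_sym[of a b] assms
    unfolding log_mean_def by simp
  have "ln (b/a) \<le> b/a - 1" by (rule ln_le_minus_one) (use assms in simp)
  hence "ln b - ln a \<le> (b - a) / a" using assms by (simp add: ln_div diff_divide_distrib)
  hence "a * (ln b - ln a) \<le> b - a" using assms by (simp add: field_simps)
  thus "a \<le> log_mean a b" unfolding e using l by (simp add: field_simps)
  have "ln (a/b) \<le> a/b - 1" by (rule ln_le_minus_one) (use assms in simp)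
  hence "ln a - ln b \<le> (a - b) / b" using assms by (simp add: ln_div diff_divide_distrib)
  hence "b - a \<le> b * (ln b - ln a)" using assms by (simp add: field_simps)
  thus "log_mean a b \<le> b" unfolding e using l by (simp add: field_simps)
qed

lemma lm_bounds: assumes "0 < a" "0 < b"
  shows "min a b \<le> log_mean a b" "log_mean a b \<le> max a b"
proof -
  consider "a < b" | "a = b" | "b < a" by linarith
  hence "min a b \<le> log_mean a b \<and> log_mean a b \<le> max a b"
  proof cases
    case 1 thus ?thesis using lm_lt[OF assms(1) 1] by simp
  next
    case 2 thus ?thesis unfolding log_mean_def by simp
  next
    case 3 thus ?thesis using lm_lt[OF assms(2) 3] lm_sym[of a b] by simp
  qed
  thus "min a b \<le> log_mean a b" "log_mean a b \<le> max a b" by auto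
qed

lemma L_le_exp: "(L::real) \<le> 2 * exp (L / 2)"
proof -
  have "1 + L/2 \<le> exp (L/2)" by (rule exp_ge_add_one_self)
  moreover have "exp (L/2) > 0" by simp
  ultimately show ?thesis by linarith
qed

lemma LD0:
  assumes a: "0 < a" and b: "0 < b" and ba: "b \<le> a" and al: "0 \<le> al" and p: "0 < p" "p < 1"
    and h1: "al * (- ln p) \<le> a" and h2: "al * (- ln (1 - p)) \<le> b"
  shows "al \<le> 8 * log_mean a b"
proof (cases "a \<le> 4 * b")
  case True
  have "min a b = b" using ba by simp
  hence lmb: "b \<le> log_mean a b" using lm_bounds[OF a b] by simp
  have "al * ln 2 \<le> a"
  proof (cases "p \<le> 1/2")
    case True
    hence "2 \<le> 1/p" using p by (simp add: field_simps)
    hence "ln 2 \<le> ln (1/p)" using p by (subst ln_le_cancel_iff) auto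
    hence "ln 2 \<le> - ln p" using p by (simp add: ln_div)
    thus ?thesis using h1 al by (smt (verit) mult_left_mono)
  next
    case False
    hence "2 \<le> 1/(1-p)" using p by (simp add: field_simps)
    hence "ln 2 \<le> ln (1/(1-p))" using p by (subst ln_le_cancel_iff) auto
    hence "ln 2 \<le> - ln (1-p)" using p by (simp add: ln_div)
    thus ?thesis using h2 al ba by (smt (verit) mult_left_mono)
  qed
  hence "al * (1/2) \<le> 4 * b" using ln2_gt al True by (smt (verit) mult_left_mono)
  thus ?thesis using lmb by linarith
next
  case False
  define L where "L = ln a - ln b"
  have eL: "exp L = a / b" unfolding L_def using a b by (simp add: exp_diff)
  have Lpos: "L > 0" unfolding L_def using False b a by simp
  have lm: "log_mean a b = (a - b) / L" unfolding L_def log_mean_def using False b by auto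
  have "al * L \<le> 2 * a"
  proof (cases "- ln p \<ge> L / 2")
    case True
    hence "al * (L/2) \<le> al * (- ln p)" using al by (intro mult_left_mono) auto
    hence "al * L \<le> 2 * (al * (- ln p))" by simp
    thus ?thesis using h1 by linarith
  next
    case nt: False
    hence "ln p > - L/2" by simp
    hence pg: "p > exp (- L / 2)" using p by (metis exp_less_cancel_iff exp_ln)
    have "ln (1 - p) \<le> (1 - p) - 1" by (rule ln_le_minus_one) (use p in simp)
    hence "al * p \<le> al * (- ln (1 - p))" using al by (intro mult_left_mono) auto
    hence alp: "al * p \<le> b" using h2 by linarith
    have "al * exp (- L / 2) \<le> al * p" using pg al by (intro mult_left_mono) auto
    hence "al * exp (- L/2) \<le> b" using alp by linarith
    hence "al \<le> b * exp (L/2)" by (simp add: exp_minus field_simps)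
    hence "al * L \<le> b * exp (L/2) * L" using Lpos by (intro mult_right_mono) auto
    also have "\<dots> \<le> b * exp (L/2) * (2 * exp (L/2))" using b L_le_exp[of L]
      by (intro mult_left_mono) auto
    also have "\<dots> = 2 * b * exp L" by (simp add: exp_add[symmetric])
    also have "\<dots> = 2 * a" using eL b by simp
    finally show ?thesis .
  qed
  hence "al \<le> 2 * a / L" using Lpos by (simp add: field_simps)
  also have "\<dots> \<le> 8 * ((a - b) / L)" using Lpos False b by (simp add: divide_right_mono field_simps)
  finally show ?thesis using lm by simp
qed


lemma LD:
  assumes a: "0 < a" and b: "0 < b" and al: "0 \<le> al" and p: "0 < p" "p < 1"
    and h1: "al * (- ln p) \<le> a" and h2: "al * (- ln (1 - p)) \<le> b"
  shows "al \<le> 8 * log_mean a b"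
proof (cases "b \<le> a")
  case True show ?thesis using LD0[OF a b True al p h1 h2] .
next
  case False
  have "al \<le> 8 * log_mean b a"
    by (rule LD0[OF b a _ al, of "1 - p"]) (use False p h1 h2 in auto)
  thus ?thesis using lm_sym by simp
qed

lemma UT:
  assumes a: "0 < a" "a \<le> A" and b: "0 < b" "b \<le> B" and B: "0 < B" "B < A"
  shows "log_mean a b \<le> 2 * A / (ln A - ln B)"
proof -
  define L0 where "L0 = ln A - ln B"
  have L0pos: "L0 > 0" unfolding L0_def using B by simp
  have eL0: "exp L0 = A / B" unfolding L0_def using B by (simp add: exp_diff)
  have key: "B * exp (L0/2) * L0 \<le> 2 * A"
  proof -
    have "B * exp (L0/2) * L0 \<le> B * exp (L0/2) * (2 * exp (L0/2))"
      using B L_le_exp[of L0] by (intro mult_left_mono) auto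
    also have "\<dots> = 2 * B * exp L0" by (simp add: exp_add[symmetric])
    also have "\<dots> = 2 * A" using eL0 B by simp
    finally show ?thesis .
  qed
  have "log_mean a b \<le> 2 * A / L0"
  proof (cases "a \<le> b")
    case True
    have "log_mean a b \<le> b" using lm_bounds(2)[OF a(1) b(1)] True by simp
    also have "\<dots> \<le> B" by fact
    also have "B \<le> 2 * A / L0"
    proof -
      have "B * 1 \<le> B * exp (L0/2)" using B L0pos by (intro mult_left_mono) auto
      hence "B * L0 \<le> B * exp (L0/2) * L0" using L0pos by (intro mult_right_mono) auto
      hence "B * L0 \<le> 2 * A" using key by linarith
      thus ?thesis using L0pos by (simp add: field_simps)
    qed
    finally show ?thesis .
  next
    case False
    define l where "l = ln a - ln b"
    have lpos: "l > 0" unfolding l_def using False b a by simp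
    have lm: "log_mean a b = (a - b) / l" unfolding l_def log_mean_def using False by auto
    have lma: "log_mean a b \<le> a / l" unfolding lm using lpos b by (intro divide_right_mono) auto
    show ?thesis
    proof (cases "l \<ge> L0 / 2")
      case True
      have "a / l \<le> a / (L0/2)" using True L0pos a by (intro divide_left_mono) auto
      also have "\<dots> \<le> 2 * A / L0" using a L0pos by (simp add: field_simps)
      finally show ?thesis using lma by linarith
    next
      case nt: False
      have "log_mean a b \<le> a" using lm_bounds(2)[OF a(1) b(1)] False by simp
      have ea: "a = b * exp l" unfolding l_def using a b by (simp add: exp_diff)
      have "exp l \<le> exp (L0/2)" using nt by simp
      hence "a \<le> B * exp (L0/2)" unfolding ea using b by (intro mult_mono) auto
      hence "a * L0 \<le> B * exp (L0/2) * L0" using L0pos by (intro mult_right_mono) auto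
      hence "a * L0 \<le> 2 * A" using key by linarith
      hence "a \<le> 2 * A / L0" using L0pos by (simp add: field_simps)
      thus ?thesis using \<open>log_mean a b \<le> a\<close> by linarith
    qed
  qed
  thus ?thesis unfolding L0_def .
qed



context rc begin

abbreviation "alpha \<equiv> log_sobolev V P m"
definition "LS = {E f / Ent V m (\<lambda>x. (f x)\<^sup>2) | f. N f = 1 \<and> Ent V m (\<lambda>x. (f x)\<^sup>2) > 0}"
lemma alpha_eq: "alpha = Inf LS" unfolding log_sobolev_def LS_def by simp

lemma LS_bdd: "bdd_below LS"
proof (rule bdd_belowI[of _ 0])
  fix y assume "y \<in> LS"
  then obtain f where "y = E f / Ent V m (\<lambda>x. (f x)\<^sup>2)" "Ent V m (\<lambda>x. (f x)\<^sup>2) > 0" unfolding LS_def by blast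
  thus "0 \<le> y" using E_nn[of f] by simp
qed

lemma two_points: assumes "card V \<ge> 2" obtains x y where "x \<in> V" "y \<in> V" "x \<noteq> y"
proof -
  have "V \<noteq> {}" using assms by auto
  then obtain x where x: "x \<in> V" by blast
  have "card (V - {x}) \<ge> 1" using assms x finV by (simp add: card_Diff_singleton)
  have "V - {x} \<noteq> {}"
  proof
    assume h: "V - {x} = {}"
    have "card (V - {x}) = 0" unfolding h by simp
    thus False using \<open>card (V - {x}) \<ge> 1\<close> by simp
  qed
  then obtain y where "y \<in> V - {x}" by blast
  thus ?thesis using that x by blast
qed

lemma m_lt1: assumes "card V \<ge> 2" "x \<in> V" shows "m x < 1"
proof -
  obtain y where y: "y \<in> V" "y \<noteq> x"
    using two_points[OF assms(1)] by (metis)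
  have "sum m {x, y} \<le> sum m V" using assms(2) y finV mnn by (intro sum_mono2) auto
  hence "m x + m y \<le> 1" using y msum by simp
  thus ?thesis using mpos[OF y(1)] by simp
qed

lemma ind_Ent: assumes "x \<in> V"
  shows "Ent V m (\<lambda>y. ((if y = x then 1 / sqrt (m x) else 0))\<^sup>2) = - ln (m x)"
proof -
  have mp: "m x > 0" by (rule mpos[OF assms])
  have sq: "(1 / sqrt (m x))\<^sup>2 = 1 / m x" using mp by (simp add: power_divide)
  have "Ent V m (\<lambda>y. ((if y = x then 1 / sqrt (m x) else 0))\<^sup>2) = (\<Sum>y\<in>V. if y = x then - ln (m x) else 0)"
    unfolding Ent_def
  proof (intro sum.cong refl)
    fix y assume "y \<in> V"
    show "(if ((if y = x then 1 / sqrt (m x) else 0))\<^sup>2 = 0 then 0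
          else ((if y = x then 1 / sqrt (m x) else 0))\<^sup>2 * ln (((if y = x then 1 / sqrt (m x) else 0))\<^sup>2)) * m y
        = (if y = x then - ln (m x) else 0)"
    proof (cases "y = x")
      case True
      have "1 / m x * ln (1 / m x) * m x = - ln (m x)" using mp by (simp add: ln_div)
      thus ?thesis using True sq mp by simp
    qed simp
  qed
  also have "\<dots> = - ln (m x)" using assms finV by simp
  finally show ?thesis .
qed

lemma LS_ne: assumes "card V \<ge> 2" shows "LS \<noteq> {}"
proof -
  obtain x y where x: "x \<in> V" using two_points[OF assms] by metis
  define f where "f = (\<lambda>y. if y = x then 1 / sqrt (m x) else 0)"
  have N1: "N f = 1" unfolding f_def by (rule ind_N[OF x])
  have "Ent V m (\<lambda>y. (f y)\<^sup>2) = - ln (m x)" unfolding f_def by (rule ind_Ent[OF x])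
  moreover have "ln (m x) < 0" using m_lt1[OF assms x] mpos[OF x] by simp
  ultimately have "Ent V m (\<lambda>y. (f y)\<^sup>2) > 0" by simp
  hence "E f / Ent V m (\<lambda>y. (f y)\<^sup>2) \<in> LS" using N1 unfolding LS_def by blast
  thus ?thesis by blast
qed

lemma alpha_le: assumes "N f = 1" "Ent V m (\<lambda>x. (f x)\<^sup>2) > 0"
  shows "alpha \<le> E f / Ent V m (\<lambda>x. (f x)\<^sup>2)"
  unfolding alpha_eq
  by (rule cInf_lower[OF _ LS_bdd]) (use assms in \<open>unfold LS_def, blast\<close>)

lemma alpha_ge: assumes "card V \<ge> 2"
  and "\<And>f. N f = 1 \<Longrightarrow> Ent V m (\<lambda>x. (f x)\<^sup>2) > 0 \<Longrightarrow> c \<le> E f / Ent V m (\<lambda>x. (f x)\<^sup>2)"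
  shows "c \<le> alpha"
  unfolding alpha_eq
proof (rule cInf_greatest[OF LS_ne[OF assms(1)]])
  fix y assume "y \<in> LS"
  then obtain f where f: "y = E f / Ent V m (\<lambda>x. (f x)\<^sup>2)" "N f = 1" "Ent V m (\<lambda>x. (f x)\<^sup>2) > 0" unfolding LS_def by blast
  show "c \<le> y" unfolding f(1) by (rule assms(2)[OF f(2,3)])
qed

lemma alpha_nn: assumes "card V \<ge> 2" shows "0 \<le> alpha"
proof (rule alpha_ge[OF assms])
  fix f assume "Ent V m (\<lambda>x. (f x)\<^sup>2) > 0"
  thus "0 \<le> E f / Ent V m (\<lambda>x. (f x)\<^sup>2)" using E_nn[of f] by simp
qed

lemma mass_bounds: assumes "X \<subseteq> V" "X \<noteq> {}" "X \<noteq> V"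
  shows "sum m X > 0" "sum m X < 1" "sum m (V - X) = 1 - sum m X"
proof -
  have finX: "finite X" using assms(1) finV finite_subset by blast
  show "sum m X > 0" using finX assms mpos by (intro sum_pos) auto
  have "V - X \<noteq> {}" using assms by auto
  hence p2: "sum m (V - X) > 0" using finV mpos by (intro sum_pos) auto
  have "sum m V = sum m X + sum m (V - X)"
    using assms(1) finV by (metis add.commute sum.subset_diff)
  thus "sum m (V - X) = 1 - sum m X" using msum by simp
  thus "sum m X < 1" using p2 by simp
qed

lemma lower_X: assumes "card V \<ge> 2" "X \<subseteq> V" "X \<noteq> {}" "X \<noteq> V"
  shows "alpha * (- ln (sum m X)) \<le> lam X"
proof (rule lam_ge[OF assms(2,3)])
  fix f assume N1: "N f = 1" and z: "\<forall>x\<in>V - X. f x = 0"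
  have j: "- ln (sum m X) \<le> Ent V m (\<lambda>x. (f x)\<^sup>2)" by (rule jensen[OF assms(2) N1 z])
  have "ln (sum m X) < 0" using mass_bounds[OF assms(2-4)] by simp
  hence Epos: "Ent V m (\<lambda>x. (f x)\<^sup>2) > 0" using j by linarith
  have "alpha \<le> E f / Ent V m (\<lambda>x. (f x)\<^sup>2)" by (rule alpha_le[OF N1 Epos])
  hence "alpha * Ent V m (\<lambda>x. (f x)\<^sup>2) \<le> E f" using Epos by (simp add: field_simps)
  moreover have "alpha * (- ln (sum m X)) \<le> alpha * Ent V m (\<lambda>x. (f x)\<^sup>2)"
    using alpha_nn[OF assms(1)] j by (intro mult_left_mono) auto
  ultimately show "alpha * (- ln (sum m X)) \<le> E f" by linarith
qed

lemma spec_set_ne: assumes "card V \<ge> 2"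
  shows "{log_mean (lam X) (lam (V - X)) | X. X \<subseteq> V \<and> X \<noteq> {} \<and> X \<noteq> V} \<noteq> {}"
proof -
  obtain x y where xy: "x \<in> V" "y \<in> V" "x \<noteq> y" using two_points[OF assms] by metis
  have "{x} \<subseteq> V \<and> {x} \<noteq> {} \<and> {x} \<noteq> V" using xy by auto
  thus ?thesis by blast
qed

theorem lower_dir: assumes "card V \<ge> 2"
  shows "(1/8) * alpha \<le> alpha_spectral V P m"
  unfolding alpha_spectral_def
proof (rule cInf_greatest[OF spec_set_ne[OF assms]])
  fix z assume "z \<in> {log_mean (lam X) (lam (V - X)) | X. X \<subseteq> V \<and> X \<noteq> {} \<and> X \<noteq> V}"
  then obtain X where X: "z = log_mean (lam X) (lam (V - X))" "X \<subseteq> V" "X \<noteq> {}" "X \<noteq> V" by blast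
  have X': "V - X \<subseteq> V" "V - X \<noteq> {}" "V - X \<noteq> V" using X by auto
  have VX: "V - (V - X) = X" using X by auto
  have a: "lam X > 0" by (rule lam_pos[OF X(2-4)])
  have b: "lam (V - X) > 0" by (rule lam_pos[OF X'])
  have h1: "alpha * (- ln (sum m X)) \<le> lam X" by (rule lower_X[OF assms X(2-4)])
  have h2: "alpha * (- ln (sum m (V - X))) \<le> lam (V - X)" by (rule lower_X[OF assms X'])
  have "alpha \<le> 8 * log_mean (lam X) (lam (V - X))"
    by (rule LD[OF a b alpha_nn[OF assms] mass_bounds(1,2)[OF X(2-4)] h1])
       (use h2 mass_bounds(3)[OF X(2-4)] in simp)
  thus "(1/8) * alpha \<le> z" unfolding X(1) by simp
qed

end


context rc begin

abbreviation "spec \<equiv> alpha_spectral V P m"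

lemma spec_lower: assumes "X \<subseteq> V" "X \<noteq> {}" "X \<noteq> V"
  shows "spec \<le> log_mean (lam X) (lam (V - X))"
  unfolding alpha_spectral_def
proof (rule cInf_lower)
  show "log_mean (lam X) (lam (V - X)) \<in> {log_mean (lam X) (lam (V - X)) | X. X \<subseteq> V \<and> X \<noteq> {} \<and> X \<noteq> V}"
    using assms by blast
  have "{log_mean (lam X) (lam (V - X)) | X. X \<subseteq> V \<and> X \<noteq> {} \<and> X \<noteq> V}
      \<subseteq> (\<lambda>X. log_mean (lam X) (lam (V - X))) ` Pow V" by auto
  moreover have "finite ((\<lambda>X. log_mean (lam X) (lam (V - X))) ` Pow V)" using finV by simp
  ultimately have "finite {log_mean (lam X) (lam (V - X)) | X. X \<subseteq> V \<and> X \<noteq> {} \<and> X \<noteq> V}"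
    using finite_subset by blast
  thus "bdd_below {log_mean (lam X) (lam (V - X)) | X. X \<subseteq> V \<and> X \<noteq> {} \<and> X \<noteq> V}"
    by (rule bdd_below_finite)
qed

lemma lip_max: "(max (a - t) 0 - max (b - t) 0)^2 \<le> ((a::real) - b)^2"
proof -
  have "\<bar>max (a - t) 0 - max (b - t) 0\<bar> \<le> \<bar>a - b\<bar>" by (simp add: max_def abs_if)
  thus ?thesis by (simp add: abs_le_square_iff)
qed

lemma lip_min: "((t - min a t) - (t - min b t))^2 \<le> ((a::real) - b)^2"
proof -
  have "\<bar>(t - min a t) - (t - min b t)\<bar> \<le> \<bar>a - b\<bar>" by (simp add: min_def abs_if)
  thus ?thesis by (simp add: abs_le_square_iff)
qed

lemma sum_m_split: assumes "A \<subseteq> V" shows "sum m (V - A) = 1 - sum m A"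
proof -
  have "sum m V = sum m A + sum m (V - A)"
    using assms finV by (metis add.commute sum.subset_diff)
  thus ?thesis using msum by simp
qed

lemma FK_core:
  assumes A: "A \<subseteq> V" "sum m A \<le> 1/2" and nn: "\<forall>x\<in>V. phi x \<ge> 0"
    and z: "\<forall>x\<in>V - A. phi x = 0" and N1: "N phi = 1" and t: "t > 0" "t^2 * sum m A \<le> 1/4"
  shows "\<exists>X. X \<subseteq> V \<and> X \<noteq> {} \<and> X \<noteq> V \<and> lam X \<le> 4 * E phi \<and> lam (V - X) \<le> 2 * E phi / t^2"
proof -
  define X where "X = {x\<in>V. phi x > t}"
  define u where "u = (\<lambda>x. max (phi x - t) 0)"
  define g where "g = (\<lambda>x. t - min (phi x) t)"
  have XV: "X \<subseteq> V" unfolding X_def by auto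
  have XA: "X \<subseteq> A" unfolding X_def using z t by force
  have uz: "\<forall>x\<in>V - X. u x = 0" unfolding u_def X_def by auto
  have gz: "\<forall>x\<in>V - (V - X). g x = 0" unfolding g_def X_def by auto
  have Eu: "E u \<le> E phi" unfolding u_def by (rule E_mono) (rule lip_max)
  have Eg: "E g \<le> E phi" unfolding g_def by (rule E_mono) (rule lip_min)
  have pt: "(phi x)^2 * m x \<le> 2 * ((u x)^2 * m x) + 2 * t^2 * (if x \<in> A then m x else 0)" if x: "x \<in> V" for x
  proof (cases "phi x > t")
    case True
    hence xA: "x \<in> A" using XA x unfolding X_def by auto
    have "phi x = u x + t" unfolding u_def using True by simp
    moreover have "0 \<le> (u x - t)^2" by simp
    ultimately have "(phi x)^2 \<le> 2 * (u x)^2 + 2 * t^2" by (simp add: power2_eq_square algebra_simps)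
    hence "(phi x)^2 * m x \<le> (2 * (u x)^2 + 2 * t^2) * m x" using mnn[OF x] by (intro mult_right_mono) auto
    thus ?thesis using xA by (simp add: algebra_simps)
  next
    case False
    hence u0: "u x = 0" unfolding u_def by simp
    show ?thesis
    proof (cases "x \<in> A")
      case True
      have "(phi x)^2 \<le> t^2" using False nn x by (intro power_mono) auto
      hence "(phi x)^2 * m x \<le> t^2 * m x" using mnn[OF x] by (intro mult_right_mono) auto
      moreover have "t^2 * m x \<le> 2 * t^2 * m x" using mnn[OF x] by simp
      ultimately have "(phi x)^2 * m x \<le> 2 * t^2 * m x" by linarith
      thus ?thesis using True u0 by simp
    next
      case nA: False
      thus ?thesis using z x u0 by simp
    qed
  qed
  have "1 \<le> (\<Sum>x\<in>V. 2 * ((u x)^2 * m x) + 2 * t^2 * (if x \<in> A then m x else 0))"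
    using N1 unfolding inner_m_def by (metis (no_types, lifting) pt power2_eq_square sum_mono)
  also have "\<dots> = 2 * N u + 2 * t^2 * sum m A"
    unfolding sum.distrib sum_distrib_left[symmetric] inner_m_def
    using A(1) finV by (simp add: sum.If_cases Int_absorb1 power2_eq_square)
  finally have "1 \<le> 2 * N u + 2 * t^2 * sum m A" .
  hence Nu: "N u \<ge> 1/4" using t(2) by linarith
  have "(\<Sum>x\<in>V. if x \<in> A then 0 else t^2 * m x) \<le> N g"
    unfolding inner_m_def
  proof (intro sum_mono)
    fix x assume x: "x \<in> V"
    show "(if x \<in> A then 0 else t^2 * m x) \<le> g x * g x * m x"
      using z x mnn[OF x] t by (auto simp: g_def power2_eq_square)
  qed
  moreover have "(\<Sum>x\<in>V. if x \<in> A then 0 else t^2 * m x) = t^2 * sum m (V - A)"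
    using finV by (simp add: sum.If_cases sum_distrib_left Diff_eq)
  moreover have "sum m (V - A) \<ge> 1/2" using sum_m_split[OF A(1)] A(2) by simp
  ultimately have "N g \<ge> t^2 * (1/2)"
    by (smt (verit) mult_left_mono zero_le_power2)
  hence Ng: "N g \<ge> t^2 / 2" by simp
  have Xne: "X \<noteq> {}"
  proof
    assume "X = {}"
    hence "\<forall>x\<in>V. u x = 0" using uz by auto
    hence "N u = 0" unfolding inner_m_def by simp
    thus False using Nu by simp
  qed
  have XnV: "X \<noteq> V"
  proof
    assume "X = V"
    hence "A = V" using XA A(1) by auto
    hence "sum m (V - A) = 0" by simp
    thus False using sum_m_split[OF A(1)] A(2) by simp
  qed
  have l1: "lam X \<le> E u / N u" by (rule lam_lower[OF uz]) (use Nu in simp)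
  also have "\<dots> \<le> E phi / (1/4)" using Nu Eu E_nn[of u]
    by (meson frac_le order.trans zero_le_divide_iff zero_less_divide_1_iff zero_less_numeral)
  finally have l1': "lam X \<le> 4 * E phi" by simp
  have t2: "t^2 / 2 > 0" using t by simp
  have "lam (V - X) \<le> E g / N g" by (rule lam_lower[OF gz]) (use Ng t2 in linarith)
  also have "\<dots> \<le> E phi / (t^2/2)" using Ng Eg E_nn[of g] t2 by (intro frac_le) auto
  finally have l2: "lam (V - X) \<le> 2 * E phi / t^2" by (simp add: mult.commute)
  show ?thesis using XV Xne XnV l1' l2 by blast
qed

end


context rc begin

lemma FK1n:
  assumes A: "A \<subseteq> V" "sum m A \<le> 1/2" and nn: "\<forall>x\<in>V. phi x \<ge> 0"
    and z: "\<forall>x\<in>V - A. phi x = 0" and N1: "N phi = 1"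
  shows "spec \<le> 8 * E phi"
proof -
  have "(1/2::real)^2 * sum m A \<le> 1/4" using A(2) by (simp add: power2_eq_square)
  then obtain X where X: "X \<subseteq> V" "X \<noteq> {}" "X \<noteq> V" "lam X \<le> 4 * E phi"
      "lam (V - X) \<le> 2 * E phi / (1/2)^2"
    using FK_core[OF A nn z N1, of "1/2"] by auto
  have X': "V - X \<subseteq> V" "V - X \<noteq> {}" "V - X \<noteq> V" using X by auto
  have "spec \<le> log_mean (lam X) (lam (V - X))" by (rule spec_lower[OF X(1-3)])
  also have "\<dots> \<le> max (lam X) (lam (V - X))" by (rule lm_bounds(2)[OF lam_pos[OF X(1-3)] lam_pos[OF X']])
  also have "\<dots> \<le> 8 * E phi" using X(4,5) E_nn[of phi] by (simp add: power2_eq_square)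
  finally show ?thesis .
qed

lemma FK2n:
  assumes A: "A \<subseteq> V" "sum m A \<le> 1/2" and nn: "\<forall>x\<in>V. phi x \<ge> 0"
    and z: "\<forall>x\<in>V - A. phi x = 0" and N1: "N phi = 1"
  shows "spec * (- ln (sum m A) - ln 2) \<le> 8 * E phi"
proof -
  define p where "p = sum m A"
  have finA: "finite A" using A(1) finV finite_subset by blast
  have Ane: "A \<noteq> {}"
  proof
    assume "A = {}"
    hence "N phi = 0" using z unfolding inner_m_def by simp
    thus False using N1 by simp
  qed
  have ppos: "p > 0" unfolding p_def using finA Ane A(1) mpos by (intro sum_pos) auto
  have "spec * (- ln p - ln 2) \<le> 8 * E phi"
  proof (cases "p = 1/2")
    case True
    have "- ln p - ln 2 = 0" unfolding True by (simp add: ln_div)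
    thus ?thesis using E_nn[of phi] by simp
  next
    case False
    hence plt: "p < 1/2" using A(2) unfolding p_def by simp
    define t where "t = 1 / (2 * sqrt p)"
    have tpos: "t > 0" unfolding t_def using ppos by simp
    have t2: "t^2 = 1 / (4 * p)" unfolding t_def using ppos by (simp add: power_divide power_mult_distrib)
    have "t^2 * sum m A \<le> 1/4" unfolding t2 p_def[symmetric] using ppos by simp
    then obtain X where X: "X \<subseteq> V" "X \<noteq> {}" "X \<noteq> V" "lam X \<le> 4 * E phi"
        "lam (V - X) \<le> 2 * E phi / t^2"
      using FK_core[OF A nn z N1 tpos] by auto
    have X': "V - X \<subseteq> V" "V - X \<noteq> {}" "V - X \<noteq> V" using X by auto
    have a: "lam X > 0" by (rule lam_pos[OF X(1-3)])
    have b: "lam (V - X) > 0" by (rule lam_pos[OF X'])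
    have Epos: "E phi > 0" using a X(4) by simp
    have b2: "lam (V - X) \<le> 8 * p * E phi" using X(5) unfolding t2 using ppos by (simp add: field_simps)
    have Bpos: "8 * p * E phi > 0" using ppos Epos by simp
    have BA: "8 * p * E phi < 4 * E phi" using plt Epos by simp
    have "spec \<le> log_mean (lam X) (lam (V - X))" by (rule spec_lower[OF X(1-3)])
    also have "\<dots> \<le> 2 * (4 * E phi) / (ln (4 * E phi) - ln (8 * p * E phi))"
      by (rule UT[OF a X(4) b b2 Bpos BA])
    also have "ln (4 * E phi) - ln (8 * p * E phi) = - ln p - ln 2"
    proof -
      have l8: "ln (8::real) = ln 2 + ln 4" using ln_mult[of 2 4] by simp
      have "8 * p * E phi = (2 * p) * (4 * E phi)" by simp
      hence "ln (8 * p * E phi) = ln (2 * p) + ln (4 * E phi)" using ppos Epos l8 by (simp add: ln_mult)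
      moreover have "ln (2 * p) = ln 2 + ln p" using ppos by (simp add: ln_mult)
      ultimately show ?thesis using ppos Epos by (simp add: ln_mult)
    qed
    finally have sp: "spec \<le> 8 * E phi / (- ln p - ln 2)" by simp
    have "ln (2 * p) < ln 1" using plt ppos by (subst ln_less_cancel_iff) auto
    hence Lpos: "- ln p - ln 2 > 0" using ppos by (simp add: ln_mult)
    thus "spec * (- ln p - ln 2) \<le> 8 * E phi" using sp by (simp add: field_simps)
  qed
  thus ?thesis unfolding p_def .
qed

lemma scale_norm:
  assumes "N phi > 0"
  shows "N (\<lambda>x. (1 / sqrt (N phi)) * phi x) = 1" "E (\<lambda>x. (1 / sqrt (N phi)) * phi x) = E phi / N phi"
  using assms unfolding N_scale E_scale by (simp_all add: power_divide)

lemma FK: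
  assumes A: "A \<subseteq> V" "sum m A \<le> 1/2" and nn: "\<forall>x\<in>V. phi x \<ge> 0"
    and z: "\<forall>x\<in>V - A. phi x = 0"
  shows "spec * N phi \<le> 8 * E phi" "spec * (- ln (sum m A) - ln 2) * N phi \<le> 8 * E phi"
proof -
  have "spec * N phi \<le> 8 * E phi \<and> spec * (- ln (sum m A) - ln 2) * N phi \<le> 8 * E phi"
  proof (cases "N phi = 0")
    case True thus ?thesis using E_nn[of phi] by simp
  next
    case False
    hence Np: "N phi > 0" using N_nn[of phi] by simp
    define psi where "psi = (\<lambda>x. (1 / sqrt (N phi)) * phi x)"
    have sq: "0 \<le> sqrt (N phi)" using N_nn[of phi] by simp
    have nn': "\<forall>x\<in>V. psi x \<ge> 0" unfolding psi_def using nn sq by (simp add: divide_nonneg_nonneg)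
    have z': "\<forall>x\<in>V - A. psi x = 0" unfolding psi_def using z by simp
    have N1: "N psi = 1" and Ep: "E psi = E phi / N phi" unfolding psi_def using scale_norm[OF Np] by auto
    have "spec \<le> 8 * (E phi / N phi)" using FK1n[OF A nn' z' N1] Ep by simp
    hence r1: "spec * N phi \<le> 8 * E phi" using Np by (simp add: field_simps)
    have "spec * (- ln (sum m A) - ln 2) \<le> 8 * (E phi / N phi)" using FK2n[OF A nn' z' N1] Ep by simp
    hence r2: "spec * (- ln (sum m A) - ln 2) * N phi \<le> 8 * E phi" using Np by (simp add: field_simps)
    show ?thesis using r1 r2 by simp
  qed
  thus "spec * N phi \<le> 8 * E phi" "spec * (- ln (sum m A) - ln 2) * N phi \<le> 8 * E phi" by auto
qed

end



definition sl :: "nat \<Rightarrow> real \<Rightarrow> real" where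
  "sl j y = min (max (y - 2^j) 0) (2^j)"

lemma sl_sum: "(\<Sum>j\<le>N. sl j y) = min (max (y - 1) 0) (2^(Suc N) - 1)"
proof (induction N)
  case 0 thus ?case by (simp add: sl_def)
next
  case (Suc N)
  have "(\<Sum>j\<le>Suc N. sl j y) = min (max (y - 1) 0) (2^(Suc N) - 1) + sl (Suc N) y"
    using Suc by simp
  also have "\<dots> = min (max (y - 1) 0) (2^(Suc (Suc N)) - 1)"
  proof -
    define K :: real where "K = 2^(Suc N)"
    have p: "(2::real)^(Suc (Suc N)) = 2 * K" unfolding K_def by simp
    have K1: "1 \<le> K" unfolding K_def by (rule one_le_power) simp
    have "min (max (y - 1) 0) (K - 1) + min (max (y - K) 0) K = min (max (y - 1) 0) (2 * K - 1)"
    proof -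
      consider "y \<le> 1" | "1 \<le> y" "y \<le> K" | "K \<le> y" "y \<le> 2 * K" | "2 * K \<le> y" by linarith
      thus ?thesis
      proof cases
        case 1 thus ?thesis using K1 by (simp add: min_def max_def)
      next
        case 2 thus ?thesis using K1 by (simp add: min_def max_def)
      next
        case 3 thus ?thesis using K1 by (simp add: min_def max_def)
      next
        case 4 thus ?thesis using K1 by (simp add: min_def max_def)
      qed
    qed
    thus ?thesis unfolding sl_def p K_def[symmetric] by simp
  qed
  finally show ?case .
qed

lemma sl_mono: "a \<le> b \<Longrightarrow> sl j a \<le> sl j b"
  unfolding sl_def by (intro min.mono max.mono) auto

lemma sl_nn: "sl j y \<ge> 0"
  unfolding sl_def by simp

lemma sq_sum_le: assumes "\<And>j. d j \<ge> (0::real)" shows "(\<Sum>j\<le>(N::nat). (d j)^2) \<le> (\<Sum>j\<le>N. d j)^2"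
proof (induction N)
  case 0 thus ?case by simp
next
  case (Suc N)
  have s: "(\<Sum>j\<le>N. d j) \<ge> 0" using assms by (intro sum_nonneg) auto
  have "(\<Sum>j\<le>Suc N. (d j)^2) = (\<Sum>j\<le>N. (d j)^2) + (d (Suc N))^2" by simp
  also have "\<dots> \<le> (\<Sum>j\<le>N. d j)^2 + (d (Suc N))^2" using Suc by simp
  also have "\<dots> \<le> ((\<Sum>j\<le>N. d j) + d (Suc N))^2"
    using s assms[of "Suc N"] by (simp add: power2_eq_square algebra_simps)
  also have "\<dots> = (\<Sum>j\<le>Suc N. d j)^2" by simp
  finally show ?case .
qed

lemma clamp: assumes "b \<le> a" "(0::real) \<le> c"
  shows "0 \<le> min (max (a - 1) 0) c - min (max (b - 1) 0) c" "min (max (a - 1) 0) c - min (max (b - 1) 0) c \<le> a - b"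
  using assms by (auto simp: min_def max_def)

lemma sl_pair_aux: assumes "b \<le> a" shows "(\<Sum>j\<le>N. (sl j a - sl j b)^2) \<le> (a - b)^2"
proof -
  have dnn: "\<And>j. sl j a - sl j b \<ge> 0" using sl_mono[OF assms] by simp
  have "(\<Sum>j\<le>N. (sl j a - sl j b)^2) \<le> (\<Sum>j\<le>N. (sl j a - sl j b))^2"
    by (rule sq_sum_le[OF dnn])
  also have "(\<Sum>j\<le>N. (sl j a - sl j b)) = min (max (a - 1) 0) (2^(Suc N) - 1) - min (max (b - 1) 0) (2^(Suc N) - 1)"
    by (simp add: sum_subtractf sl_sum)
  also have "(\<dots>)^2 \<le> (a - b)^2"
  proof -
    have "(1::real) \<le> 2^(Suc N)" by (rule one_le_power) simp
    hence c: "(0::real) \<le> 2^(Suc N) - 1" by simp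
    show ?thesis using clamp[OF assms c] by (intro power_mono) auto
  qed
  finally show ?thesis .
qed

lemma sl_pair: "(\<Sum>j\<le>N. (sl j a - sl j b)^2) \<le> (a - b)^2"
proof (cases "b \<le> a")
  case True thus ?thesis by (rule sl_pair_aux)
next
  case False
  have "(\<Sum>j\<le>N. (sl j b - sl j a)^2) \<le> (b - a)^2" by (rule sl_pair_aux) (use False in simp)
  thus ?thesis by (simp add: power2_commute)
qed

lemma find_level: "2 \<le> y \<Longrightarrow> y \<le> 2^(Suc N) \<Longrightarrow> \<exists>j\<le>N. 2^(j+1) \<le> y \<and> y \<le> (2::real)^(j+2)"
proof (induction N)
  case 0
  have "(2::real)^(0+1) \<le> y \<and> y \<le> 2^(0+2)" using 0 by simp
  moreover have "(0::nat) \<le> 0" by simp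
  ultimately show ?case by blast
next
  case (Suc N)
  show ?case
  proof (cases "y \<le> 2^(Suc N)")
    case True
    then obtain j where "j \<le> N" "2^(j+1) \<le> y \<and> y \<le> (2::real)^(j+2)" using Suc.IH Suc.prems(1) by blast
    hence "j \<le> Suc N" "2^(j+1) \<le> y \<and> y \<le> (2::real)^(j+2)" by auto
    thus ?thesis by blast
  next
    case False
    have a: "(2::real)^(N + 1) \<le> y" using False by simp
    have b: "y \<le> (2::real)^(N + 2)" using Suc.prems(2) by simp
    have "N \<le> Suc N" by simp
    thus ?thesis using a b by blast
  qed
qed

lemma PW:
  assumes y: "2 \<le> y" "y \<le> 2^(Suc N)"
  shows "y^2 * ln (y^2) \<le> 16 * ln 4 * (\<Sum>j\<le>N. (real j + 2) * (sl j y)^2)"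
proof -
  obtain j where j: "j \<le> N" "2^(j+1) \<le> y" "y \<le> (2::real)^(j+2)" using find_level[OF y] by auto
  have "(0::real) < 2^j" by simp
  have ge: "y - 2^j \<ge> 2^j" using j(2) by simp
  have m1: "max (y - 2^j) 0 = y - 2^j" using ge \<open>0 < 2^j\<close> by (intro max_absorb1) linarith
  have slj: "sl j y = 2^j" unfolding sl_def m1 using ge by (intro min_absorb2)
  have y2: "y^2 \<le> ((2::real)^(j+2))^2" using j(3) y by (intro power_mono) auto
  have sqp: "((2::real)^k)^2 = 4^k" for k
  proof -
    have "((2::real)^k)^2 = 2^(k*2)" by (simp only: power_mult)
    also have "\<dots> = (2^2)^k" by (simp only: power_mult[symmetric] mult.commute)
    finally show ?thesis by simp
  qed
  have "((2::real)^(j+2))^2 = 4^(j+2)" by (rule sqp)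
  hence y2': "y^2 \<le> 4^(j+2)" using y2 by simp
  have ypos: "y^2 > 0" using y by simp
  have "ln (y^2) \<le> ln (4^(j+2))" using y2' ypos by (subst ln_le_cancel_iff) auto
  also have "\<dots> = real (j+2) * ln 4" by (rule ln_realpow)
  also have "\<dots> = (real j + 2) * ln 4" by simp
  finally have l: "ln (y^2) \<le> (real j + 2) * ln 4" .
  have lnn: "ln (y^2) \<ge> 0" using y by (simp add: one_le_power)
  have "y^2 * ln (y^2) \<le> 4^(j+2) * ((real j + 2) * ln 4)"
    using y2' l lnn by (intro mult_mono) auto
  also have "\<dots> = 16 * ln 4 * ((real j + 2) * (sl j y)^2)"
  proof -
    have "(4::real)^(j+2) = 16 * 4^j" by (simp add: power_add)
    thus ?thesis unfolding slj sqp by (simp add: algebra_simps)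
  qed
  also have "\<dots> \<le> 16 * ln 4 * (\<Sum>j\<le>N. (real j + 2) * (sl j y)^2)"
    using j(1) by (intro mult_left_mono member_le_sum) auto
  finally show ?thesis .
qed



context rc begin

lemma ln_le_lin: "(x::real) > 0 \<Longrightarrow> ln x \<le> x - 1"
  by (rule ln_le_minus_one)

lemma LC_level:
  assumes spos: "spec \<ge> 0" and B: "B \<subseteq> V" "sum m B \<le> 1/2" and nn: "\<forall>x\<in>V. w x \<ge> 0"
    and z: "\<forall>x\<in>V - B. w x = 0" and Nw: "N w \<le> 12"
  shows "spec * ((real j + 2) * ln 4) * N (\<lambda>x. sl j (w x)) \<le> 152 * E (\<lambda>x. sl j (w x))"
proof -
  define wj where "wj = (\<lambda>x. sl j (w x))"
  define Bj where "Bj = {x\<in>V. w x > 2^j}"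
  have BjV: "Bj \<subseteq> V" unfolding Bj_def by auto
  have BjB: "Bj \<subseteq> B" unfolding Bj_def using z by force
  have finB: "finite B" using B(1) finV finite_subset by blast
  have mBj: "sum m Bj \<le> 1/2"
  proof -
    have "sum m Bj \<le> sum m B" using BjB finB mnn B(1) by (intro sum_mono2) auto
    thus ?thesis using B(2) by simp
  qed
  have nnj: "\<forall>x\<in>V. wj x \<ge> 0" unfolding wj_def by (simp add: sl_nn)
  have zj: "\<forall>x\<in>V - Bj. wj x = 0"
  proof
    fix x assume "x \<in> V - Bj"
    hence "w x \<le> 2^j" unfolding Bj_def by auto
    hence "max (w x - 2^j) 0 = 0" by simp
    thus "wj x = 0" unfolding wj_def sl_def by simp
  qed
  have F1: "spec * N wj \<le> 8 * E wj" by (rule FK(1)[OF BjV mBj nnj zj])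
  have F2: "spec * (- ln (sum m Bj) - ln 2) * N wj \<le> 8 * E wj" by (rule FK(2)[OF BjV mBj nnj zj])
  have "spec * ((real j + 2) * ln 4) * N wj \<le> 152 * E wj"
  proof (cases "N wj = 0")
    case True thus ?thesis using E_nn[of wj] by simp
  next
    case False
    have Npos: "N wj > 0" using False N_nn[of wj] by simp
    have Bjne: "Bj \<noteq> {}"
    proof
      assume "Bj = {}"
      hence "\<forall>x\<in>V. wj x = 0" using zj by auto
      hence "N wj = 0" unfolding inner_m_def by simp
      thus False using False by simp
    qed
    have finBj: "finite Bj" using BjV finV finite_subset by blast
    have mpos': "sum m Bj > 0" using finBj Bjne BjV mpos by (intro sum_pos) auto
    have "(\<Sum>x\<in>Bj. 4^j * m x) \<le> (\<Sum>x\<in>Bj. w x * w x * m x)"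
    proof (intro sum_mono mult_right_mono)
      fix x assume x: "x \<in> Bj"
      hence wx: "w x > 2^j" unfolding Bj_def by auto
      have "(0::real) \<le> 2^j" by simp
      moreover have "0 \<le> w x" using wx \<open>(0::real) \<le> 2^j\<close> by linarith
      ultimately have "(2::real)^j * 2^j \<le> w x * w x" using wx by (intro mult_mono) auto
      moreover have "(2::real)^j * 2^j = 4^j" by (simp add: power_mult_distrib[symmetric])
      ultimately show "4^j \<le> w x * w x" by simp
      show "0 \<le> m x" using x BjV mnn by auto
    qed
    also have "\<dots> \<le> (\<Sum>x\<in>V. w x * w x * m x)"
      using BjV finV mnn by (intro sum_mono2) auto
    also have "\<dots> \<le> 12" using Nw unfolding inner_m_def .
    finally have "4^j * sum m Bj \<le> 12" by (simp add: sum_distrib_left)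
    hence "sum m Bj \<le> 12 / 4^j" by (simp add: field_simps)
    hence "ln (sum m Bj) \<le> ln (12 / 4^j)" using mpos' by (subst ln_le_cancel_iff) auto
    also have "\<dots> = ln 12 - real j * ln 4" by (simp add: ln_div ln_realpow)
    finally have lnb: "real j * ln 4 \<le> - ln (sum m Bj) + ln 12" by simp
    have c4: "ln 2 + ln 12 + 2 * ln 4 \<le> (18::real)"
      using ln_le_lin[of 2] ln_le_lin[of 12] ln_le_lin[of 4] by simp
    have "(real j + 2) * ln 4 \<le> (- ln (sum m Bj) - ln 2) + 18"
      using lnb c4 by (simp add: algebra_simps)
    hence "spec * ((real j + 2) * ln 4) * N wj \<le> spec * ((- ln (sum m Bj) - ln 2) + 18) * N wj"
      using spos Npos by (intro mult_right_mono mult_left_mono) auto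
    also have "\<dots> = spec * (- ln (sum m Bj) - ln 2) * N wj + 18 * (spec * N wj)"
      by (simp add: algebra_simps)
    also have "\<dots> \<le> 8 * E wj + 18 * (8 * E wj)" using F1 F2 by linarith
    finally show ?thesis by simp
  qed
  thus ?thesis unfolding wj_def .
qed

lemma LC:
  assumes spos: "spec \<ge> 0" and B: "B \<subseteq> V" "sum m B \<le> 1/2" and nn: "\<forall>x\<in>V. w x \<ge> 0"
    and z: "\<forall>x\<in>V - B. w x = 0" and Nw: "N w \<le> 12"
  shows "spec * (\<Sum>x\<in>V. (if w x \<ge> 2 then (w x)^2 * ln ((w x)^2) else 0) * m x) \<le> 2432 * E w"
proof -
  define Mx where "Mx = (\<Sum>x\<in>V. w x)"
  have wle: "w x \<le> Mx" if "x \<in> V" for x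
    unfolding Mx_def by (rule member_le_sum) (use that nn finV in auto)
  obtain K where K: "Mx < 2^K" using real_arch_pow[of 2 Mx] by auto
  have "(2::real)^K \<le> 2^(Suc K)" by simp
  hence wN: "w x \<le> 2^(Suc K)" if "x \<in> V" for x using wle[OF that] K by linarith
  have l4: "ln (4::real) > 0" by simp
  define T where "T = (\<lambda>x. (\<Sum>j\<le>K. (real j + 2) * (sl j (w x))^2))"
  have Tnn: "T x \<ge> 0" for x unfolding T_def by (intro sum_nonneg mult_nonneg_nonneg) auto
  have pt: "(if w x \<ge> 2 then (w x)^2 * ln ((w x)^2) else 0) * m x \<le> (16 * ln 4 * T x) * m x"
    if x: "x \<in> V" for x
  proof (intro mult_right_mono)
    show "0 \<le> m x" using mnn x by simp
    show "(if w x \<ge> 2 then (w x)^2 * ln ((w x)^2) else 0) \<le> 16 * ln 4 * T x"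
    proof (cases "w x \<ge> 2")
      case True
      thus ?thesis unfolding T_def using PW[OF True wN[OF x]] by simp
    next
      case False
      thus ?thesis using Tnn[of x] l4 by simp
    qed
  qed
  have "(\<Sum>x\<in>V. (16 * ln 4 * T x) * m x) = 16 * ln 4 * (\<Sum>j\<le>K. (real j + 2) * N (\<lambda>x. sl j (w x)))"
  proof -
    have "(\<Sum>x\<in>V. (16 * ln 4 * T x) * m x) = 16 * ln 4 * (\<Sum>x\<in>V. \<Sum>j\<le>K. (real j + 2) * ((sl j (w x))^2 * m x))"
      unfolding T_def by (simp add: sum_distrib_left sum_distrib_right mult.assoc)
    also have "(\<Sum>x\<in>V. \<Sum>j\<le>K. (real j + 2) * ((sl j (w x))^2 * m x)) = (\<Sum>j\<le>K. \<Sum>x\<in>V. (real j + 2) * ((sl j (w x))^2 * m x))"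
      by (rule sum.swap)
    also have "\<dots> = (\<Sum>j\<le>K. (real j + 2) * N (\<lambda>x. sl j (w x)))"
      unfolding inner_m_def by (simp add: sum_distrib_left power2_eq_square)
    finally show ?thesis .
  qed
  moreover have "(\<Sum>x\<in>V. (if w x \<ge> 2 then (w x)^2 * ln ((w x)^2) else 0) * m x)
      \<le> (\<Sum>x\<in>V. (16 * ln 4 * T x) * m x)" by (rule sum_mono) (rule pt)
  ultimately have "(\<Sum>x\<in>V. (if w x \<ge> 2 then (w x)^2 * ln ((w x)^2) else 0) * m x)
      \<le> 16 * ln 4 * (\<Sum>j\<le>K. (real j + 2) * N (\<lambda>x. sl j (w x)))" by simp
  hence "spec * (\<Sum>x\<in>V. (if w x \<ge> 2 then (w x)^2 * ln ((w x)^2) else 0) * m x)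
      \<le> spec * (16 * ln 4 * (\<Sum>j\<le>K. (real j + 2) * N (\<lambda>x. sl j (w x))))"
    using spos by (intro mult_left_mono) auto
  also have "\<dots> = 16 * (\<Sum>j\<le>K. spec * ((real j + 2) * ln 4) * N (\<lambda>x. sl j (w x)))"
    by (simp add: sum_distrib_left algebra_simps)
  also have "\<dots> \<le> 16 * (\<Sum>j\<le>K. 152 * E (\<lambda>x. sl j (w x)))"
    using LC_level[OF spos B nn z Nw] by (intro mult_left_mono sum_mono) auto
  also have "\<dots> = 2432 * (\<Sum>j\<le>K. E (\<lambda>x. sl j (w x)))" by (simp add: sum_distrib_left)
  also have "\<dots> \<le> 2432 * E w"
  proof -
    have "(\<Sum>j\<le>K. E (\<lambda>x. sl j (w x))) \<le> E w"
      by (rule E_sum_mono[where g="\<lambda>j x. sl j (w x)"]) (auto intro: sl_pair)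
    thus ?thesis by simp
  qed
  finally show ?thesis .
qed

end



lemma split_sq: "(max (a - M) 0 - max (b - M) 0)^2 + (max (M - a) 0 - max (M - b) 0)^2 \<le> ((a::real) - b)^2"
proof (cases "a \<ge> M")
  case True
  show ?thesis
  proof (cases "b \<ge> M")
    case True
    thus ?thesis using \<open>a \<ge> M\<close> by simp
  next
    case False
    have "0 \<le> (a - M) * (M - b)" using True False by simp
    hence "(a - M)^2 + (M - b)^2 \<le> ((a - M) + (M - b))^2"
      by (simp add: power2_eq_square algebra_simps)
    moreover have "(M - b)^2 = (b - M)^2" by (rule power2_commute)
    ultimately show ?thesis using True False by simp
  qed
next
  case False
  show ?thesis
  proof (cases "b \<ge> M")
    case True
    have "0 \<le> (M - a) * (b - M)" using True False by simp
    hence "(M - a)^2 + (b - M)^2 \<le> ((M - a) + (b - M))^2"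
      by (simp add: power2_eq_square algebra_simps)
    hence "(b - M)^2 + (M - a)^2 \<le> (a - b)^2" by (simp add: power2_commute algebra_simps)
    thus ?thesis using True False by (simp add: power2_commute)
  next
    case nb: False
    thus ?thesis using False by (simp add: power2_commute)
  qed
qed

lemma psi_bound: assumes "(y::real) \<ge> 0"
  shows "(if y^2 = 0 then 0 else y^2 * ln (y^2)) - y^2 + 1 \<le> 7 * (y - 1)^2 + (if y > 3 then y^2 * ln (y^2) else 0)"
proof (cases "y = 0")
  case True thus ?thesis by simp
next
  case False
  hence yp: "y > 0" using assms by simp
  have "ln y \<le> y - 1" by (rule ln_le_minus_one[OF yp])
  hence "ln (y^2) \<le> 2 * (y - 1)" using yp by (simp add: ln_realpow)
  hence l: "y^2 * ln (y^2) \<le> y^2 * (2 * (y - 1))" by (intro mult_left_mono) auto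
  show ?thesis
  proof (cases "y > 3")
    case True
    have "1 \<le> y^2" using True by (simp add: one_le_power)
    hence "1 - y^2 \<le> 7 * (y - 1)^2" by (smt (verit) zero_le_power2)
    thus ?thesis using True yp by simp
  next
    case nt: False
    have "y^2 * ln (y^2) - y^2 + 1 \<le> y^2 * (2 * (y - 1)) - y^2 + 1" using l by linarith
    also have "y^2 * (2 * (y - 1)) - y^2 + 1 = (y - 1)^2 * (2 * y + 1)" by (simp add: power2_eq_square algebra_simps)
    also have "\<dots> \<le> (y - 1)^2 * 7" using nt by (intro mult_left_mono) auto
    finally have "y^2 * ln (y^2) - y^2 + 1 \<le> (y - 1)^2 * 7" .
    thus ?thesis using nt yp by (simp add: mult.commute)
  qed
qed

lemma xlnx_mono: assumes "1 \<le> a" "a \<le> (b::real)" shows "a^2 * ln (a^2) \<le> b^2 * ln (b^2)"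
proof -
  have a2: "a^2 \<le> b^2" using assms by (intro power_mono) auto
  have a1: "1 \<le> a^2" using assms by (simp add: one_le_power)
  have "ln (a^2) \<le> ln (b^2)" using a2 a1 by (subst ln_le_cancel_iff) auto
  moreover have "0 \<le> ln (a^2)" using a1 by simp
  ultimately show ?thesis using a2 by (intro mult_mono) auto
qed

context rc begin

lemma median: fixes f :: "nat \<Rightarrow> real" assumes "V \<noteq> {}"
  shows "\<exists>M\<in>f ` V. sum m {x\<in>V. f x > M} \<le> 1/2 \<and> sum m {x\<in>V. f x < M} \<le> 1/2"
proof -
  define Y where "Y = {y\<in>f ` V. sum m {x\<in>V. f x \<le> y} \<ge> 1/2}"
  have finY: "finite Y" unfolding Y_def using finV by simp
  define T where "T = Max (f ` V)"
  have T: "T \<in> f ` V" unfolding T_def using finV assms by simp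
  have "{x\<in>V. f x \<le> T} = V" unfolding T_def using finV by auto
  hence "T \<in> Y" unfolding Y_def using T msum by simp
  hence Yne: "Y \<noteq> {}" by auto
  define M where "M = Min Y"
  have MY: "M \<in> Y" unfolding M_def using finY Yne by simp
  hence MfV: "M \<in> f ` V" and Mm: "sum m {x\<in>V. f x \<le> M} \<ge> 1/2" unfolding Y_def by auto
  have "sum m {x\<in>V. f x > M} = 1 - sum m {x\<in>V. f x \<le> M}"
  proof -
    have "{x\<in>V. f x > M} = V - {x\<in>V. f x \<le> M}" by auto
    thus ?thesis using sum_m_split[of "{x\<in>V. f x \<le> M}"] by auto
  qed
  hence g: "sum m {x\<in>V. f x > M} \<le> 1/2" using Mm by simp
  have l: "sum m {x\<in>V. f x < M} \<le> 1/2"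
  proof (cases "{x\<in>V. f x < M} = {}")
    case True
    have "sum m {x\<in>V. f x < M} = 0" unfolding True by simp
    thus ?thesis by simp
  next
    case False
    define y' where "y' = Max (f ` {x\<in>V. f x < M})"
    have fin': "finite (f ` {x\<in>V. f x < M})" using finV by simp
    have y'in: "y' \<in> f ` {x\<in>V. f x < M}" unfolding y'_def using fin' False by simp
    hence y'V: "y' \<in> f ` V" and y'lt: "y' < M" by auto
    have "y' \<notin> Y"
    proof
      assume "y' \<in> Y"
      hence "M \<le> y'" unfolding M_def using finY by simp
      thus False using y'lt by simp
    qed
    hence small: "sum m {x\<in>V. f x \<le> y'} < 1/2" unfolding Y_def using y'V by auto
    have sub: "{x\<in>V. f x < M} \<subseteq> {x\<in>V. f x \<le> y'}"
    proof
      fix x assume x: "x \<in> {x\<in>V. f x < M}"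
      hence "f x \<le> y'" unfolding y'_def using fin' by (intro Max_ge) auto
      thus "x \<in> {x\<in>V. f x \<le> y'}" using x by simp
    qed
    have "sum m {x\<in>V. f x < M} \<le> sum m {x\<in>V. f x \<le> y'}"
      using sub finV mnn by (intro sum_mono2) auto
    thus ?thesis using small by simp
  qed
  show ?thesis using MfV g l by blast
qed

end


context rc begin

lemma MU0:
  assumes card: "card V \<ge> 2" and spos: "spec > 0" and nn: "\<forall>x\<in>V. f x \<ge> 0" and N1: "N f = 1"
  shows "spec * Ent V m (\<lambda>x. (f x)\<^sup>2) \<le> 10000 * E f"
proof -
  have Vne: "V \<noteq> {}" using card by auto
  obtain M where MfV: "M \<in> f ` V" and Mg: "sum m {x\<in>V. f x > M} \<le> 1/2" and Ml: "sum m {x\<in>V. f x < M} \<le> 1/2"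
    using median[OF Vne, of f] by blast
  have M0: "M \<ge> 0" using MfV nn by auto
  have f2: "(\<Sum>x\<in>V. (f x)^2 * m x) = 1" using N1 unfolding inner_m_def by (simp add: power2_eq_square)
  have ge: "sum m {x\<in>V. f x \<ge> M} \<ge> 1/2"
  proof -
    have "{x\<in>V. f x \<ge> M} = V - {x\<in>V. f x < M}" by auto
    hence "sum m {x\<in>V. f x \<ge> M} = 1 - sum m {x\<in>V. f x < M}" using sum_m_split[of "{x\<in>V. f x < M}"] by auto
    thus ?thesis using Ml by simp
  qed
  have "M^2 * sum m {x\<in>V. f x \<ge> M} = (\<Sum>x\<in>{x\<in>V. f x \<ge> M}. M^2 * m x)" by (simp add: sum_distrib_left)
  also have "\<dots> \<le> (\<Sum>x\<in>{x\<in>V. f x \<ge> M}. (f x)^2 * m x)"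
  proof (intro sum_mono mult_right_mono)
    fix x assume "x \<in> {x\<in>V. f x \<ge> M}"
    thus "M^2 \<le> (f x)^2" "0 \<le> m x" using M0 mnn by (auto intro: power_mono)
  qed
  also have "\<dots> \<le> (\<Sum>x\<in>V. (f x)^2 * m x)" using finV mnn by (intro sum_mono2) auto
  finally have "M^2 * sum m {x\<in>V. f x \<ge> M} \<le> 1" using f2 by simp
  moreover have "M^2 * (1/2) \<le> M^2 * sum m {x\<in>V. f x \<ge> M}" using ge by (intro mult_left_mono) auto
  ultimately have M2: "M^2 \<le> 2" by simp
  have M32: "M \<le> 3/2"
  proof (rule ccontr)
    assume "\<not> M \<le> 3/2"
    hence "(3/2)^2 < M^2" by (intro power_strict_mono) auto
    thus False using M2 by (simp add: power2_eq_square)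
  qed
  define g where "g = (\<lambda>x. max (f x - M) 0)"
  define h where "h = (\<lambda>x. max (M - f x) 0)"
  define Ap where "Ap = {x\<in>V. f x > M}"
  define Am where "Am = {x\<in>V. f x < M}"
  have gnn: "\<forall>x\<in>V. g x \<ge> 0" unfolding g_def by simp
  have hnn: "\<forall>x\<in>V. h x \<ge> 0" unfolding h_def by simp
  have gz: "\<forall>x\<in>V - Ap. g x = 0" unfolding g_def Ap_def by auto
  have hz: "\<forall>x\<in>V - Am. h x = 0" unfolding h_def Am_def by auto
  have ApV: "Ap \<subseteq> V" "sum m Ap \<le> 1/2" unfolding Ap_def using Mg by auto
  have AmV: "Am \<subseteq> V" "sum m Am \<le> 1/2" unfolding Am_def using Ml by auto
  have FKg: "spec * N g \<le> 8 * E g" by (rule FK(1)[OF ApV gnn gz])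
  have FKh: "spec * N h \<le> 8 * E h" by (rule FK(1)[OF AmV hnn hz])
  have Egh: "E g + E h \<le> E f"
  proof -
    have "(\<Sum>j\<in>{0::nat, 1}. E (if j = 0 then g else h)) \<le> E f"
    proof (rule E_sum_mono)
      fix x y assume "x \<in> V" "y \<in> V"
      show "(\<Sum>j\<in>{0::nat, 1}. ((if j = 0 then g else h) x - (if j = 0 then g else h) y)^2) \<le> (f x - f y)^2"
        unfolding g_def h_def using split_sq[of "f x" M "f y"] by simp
    qed simp
    thus ?thesis by simp
  qed
  have Eg0: "E g \<ge> 0" "E h \<ge> 0" using E_nn by auto
  define D where "D = (\<Sum>x\<in>V. (f x - M)^2 * m x)"
  have DNgh: "D = N g + N h"
    unfolding D_def inner_m_def sum.distrib[symmetric]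
    by (intro sum.cong refl) (auto simp: g_def h_def max_def power2_eq_square algebra_simps)
  define c where "c = (\<Sum>x\<in>V. f x * m x)"
  have c0: "c \<ge> 0" unfolding c_def using nn mnn by (intro sum_nonneg) auto
  have "0 \<le> (\<Sum>x\<in>V. (f x - c)^2 * m x)" using mnn by (intro sum_nonneg) auto
  also have "\<dots> = (\<Sum>x\<in>V. (f x)^2 * m x) - 2 * c * (\<Sum>x\<in>V. f x * m x) + c^2 * (\<Sum>x\<in>V. m x)"
    by (simp add: sum_subtractf sum.distrib sum_distrib_left power2_eq_square algebra_simps)
  also have "\<dots> = 1 - c^2" using f2 msum unfolding c_def by (simp add: power2_eq_square)
  finally have "c^2 \<le> 1" by simp
  hence c1: "c \<le> 1"
  proof (rule contrapos_pp)
    assume "\<not> c \<le> 1"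
    hence "1 < c^2" by (intro one_less_power) auto
    thus "\<not> c^2 \<le> 1" by simp
  qed
  have Dexp: "D = 1 - 2 * M * c + M^2"
  proof -
    have "D = (\<Sum>x\<in>V. (f x)^2 * m x) - 2 * M * (\<Sum>x\<in>V. f x * m x) + M^2 * (\<Sum>x\<in>V. m x)"
      unfolding D_def by (simp add: sum_subtractf sum.distrib sum_distrib_left power2_eq_square algebra_simps)
    thus ?thesis using f2 msum unfolding c_def by simp
  qed
  have MD: "(M - 1)^2 \<le> D"
  proof -
    have "M * c \<le> M" using c1 M0 by (simp add: mult_left_le)
    thus ?thesis unfolding Dexp by (simp add: power2_eq_square algebra_simps)
  qed
  have Nh0: "N h \<ge> 0" "N g \<ge> 0" using N_nn by auto
  have Ng3: "N g \<le> 3"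
  proof -
    have "D \<le> 1 + M^2" unfolding Dexp using M0 c0 by simp
    thus ?thesis using DNgh Nh0 M2 by linarith
  qed
  define w where "w = (\<lambda>x. 2 * g x)"
  have wnn: "\<forall>x\<in>V. w x \<ge> 0" unfolding w_def using gnn by simp
  have wz: "\<forall>x\<in>V - Ap. w x = 0" unfolding w_def using gz by simp
  have Nw: "N w \<le> 12" unfolding w_def N_scale using Ng3 by simp
  have Ew: "E w = 4 * E g" unfolding w_def E_scale by simp
  have LCw: "spec * (\<Sum>x\<in>V. (if w x \<ge> 2 then (w x)^2 * ln ((w x)^2) else 0) * m x) \<le> 2432 * E w"
    by (rule LC[OF _ ApV wnn wz Nw]) (use spos in simp)
  define Sw where "Sw = (\<Sum>x\<in>V. (if w x \<ge> 2 then (w x)^2 * ln ((w x)^2) else 0) * m x)"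
  have Ent_eq: "Ent V m (\<lambda>x. (f x)\<^sup>2) = (\<Sum>x\<in>V. ((if (f x)^2 = 0 then 0 else (f x)^2 * ln ((f x)^2)) - (f x)^2 + 1) * m x)"
  proof -
    have "(\<Sum>x\<in>V. ((if (f x)^2 = 0 then 0 else (f x)^2 * ln ((f x)^2)) - (f x)^2 + 1) * m x)
        = Ent V m (\<lambda>x. (f x)\<^sup>2) - (\<Sum>x\<in>V. (f x)^2 * m x) + (\<Sum>x\<in>V. m x)"
      unfolding Ent_def by (simp add: sum_subtractf sum.distrib algebra_simps)
    thus ?thesis using f2 msum by simp
  qed
  have pt: "((if (f x)^2 = 0 then 0 else (f x)^2 * ln ((f x)^2)) - (f x)^2 + 1) * m x
      \<le> 14 * ((f x - M)^2 * m x) + 14 * (M - 1)^2 * m x + (if w x \<ge> 2 then (w x)^2 * ln ((w x)^2) else 0) * m x"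
    if x: "x \<in> V" for x
  proof -
    have fx: "f x \<ge> 0" using nn x by simp
    have mx: "m x \<ge> 0" using mnn x by simp
    have p1: "(if (f x)^2 = 0 then 0 else (f x)^2 * ln ((f x)^2)) - (f x)^2 + 1
        \<le> 7 * (f x - 1)^2 + (if f x > 3 then (f x)^2 * ln ((f x)^2) else 0)"
      by (rule psi_bound[OF fx])
    have p2: "(f x - 1)^2 \<le> 2 * (f x - M)^2 + 2 * (M - 1)^2"
    proof -
      have "0 \<le> ((f x - M) - (M - 1))^2" by simp
      thus ?thesis by (simp add: power2_eq_square algebra_simps)
    qed
    have p3: "(if f x > 3 then (f x)^2 * ln ((f x)^2) else 0) \<le> (if w x \<ge> 2 then (w x)^2 * ln ((w x)^2) else 0)"
    proof (cases "f x > 3")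
      case True
      have wx: "w x = 2 * (f x - M)" unfolding w_def g_def using True M32 by simp
      have "f x \<le> w x" unfolding wx using True M32 by simp
      hence "(f x)^2 * ln ((f x)^2) \<le> (w x)^2 * ln ((w x)^2)" using True by (intro xlnx_mono) auto
      moreover have "w x \<ge> 2" using \<open>f x \<le> w x\<close> True by simp
      ultimately show ?thesis using True by simp
    next
      case False
      have "w x \<ge> 2 \<Longrightarrow> 0 \<le> (w x)^2 * ln ((w x)^2)"
      proof -
        assume "w x \<ge> 2"
        hence "1 \<le> (w x)^2" by (simp add: one_le_power)
        thus ?thesis by simp
      qed
      thus ?thesis using False by simp
    qed
    have "(if (f x)^2 = 0 then 0 else (f x)^2 * ln ((f x)^2)) - (f x)^2 + 1
        \<le> 14 * (f x - M)^2 + 14 * (M - 1)^2 + (if w x \<ge> 2 then (w x)^2 * ln ((w x)^2) else 0)"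
      using p1 p2 p3 by linarith
    hence "((if (f x)^2 = 0 then 0 else (f x)^2 * ln ((f x)^2)) - (f x)^2 + 1) * m x
        \<le> (14 * (f x - M)^2 + 14 * (M - 1)^2 + (if w x \<ge> 2 then (w x)^2 * ln ((w x)^2) else 0)) * m x"
      using mx by (intro mult_right_mono) auto
    thus ?thesis by (simp add: algebra_simps)
  qed
  have "Ent V m (\<lambda>x. (f x)\<^sup>2) \<le> (\<Sum>x\<in>V. 14 * ((f x - M)^2 * m x) + 14 * (M - 1)^2 * m x + (if w x \<ge> 2 then (w x)^2 * ln ((w x)^2) else 0) * m x)"
    unfolding Ent_eq by (rule sum_mono) (rule pt)
  also have "\<dots> = 14 * D + 14 * (M - 1)^2 + Sw"
    unfolding D_def Sw_def sum.distrib sum_distrib_left[symmetric] using msum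
    by (simp add: sum_distrib_left[symmetric] mult.assoc)
  also have "\<dots> \<le> 28 * D + Sw" using MD by simp
  finally have Ent_le: "Ent V m (\<lambda>x. (f x)\<^sup>2) \<le> 28 * D + Sw" .
  have "spec * Ent V m (\<lambda>x. (f x)\<^sup>2) \<le> spec * (28 * D + Sw)"
    using Ent_le spos by (intro mult_left_mono) auto
  also have "\<dots> = 28 * (spec * N g) + 28 * (spec * N h) + spec * Sw"
    unfolding DNgh by (simp add: algebra_simps)
  also have "\<dots> \<le> 28 * (8 * E g) + 28 * (8 * E h) + 2432 * (4 * E g)"
    using FKg FKh LCw unfolding Sw_def Ew by linarith
  also have "\<dots> \<le> 10000 * E f" using Egh Eg0 by linarith
  finally show ?thesis .
qed

lemma MU:
  assumes card: "card V \<ge> 2" and spos: "spec > 0" and N1: "N f = 1"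
  shows "spec * Ent V m (\<lambda>x. (f x)\<^sup>2) \<le> 10000 * E f"
proof -
  define f' where "f' = (\<lambda>x. \<bar>f x\<bar>)"
  have nn: "\<forall>x\<in>V. f' x \<ge> 0" unfolding f'_def by simp
  have N1': "N f' = 1" using N1 unfolding f'_def inner_m_def by simp
  have Ent': "(\<lambda>x. (f' x)\<^sup>2) = (\<lambda>x. (f x)\<^sup>2)" unfolding f'_def by simp
  have E': "E f' \<le> E f" unfolding f'_def
  proof (rule E_mono)
    fix x y
    have "\<bar>\<bar>f x\<bar> - \<bar>f y\<bar>\<bar> \<le> \<bar>f x - f y\<bar>" by (rule abs_triangle_ineq3)
    thus "(\<bar>f x\<bar> - \<bar>f y\<bar>)^2 \<le> (f x - f y)^2" by (simp add: abs_le_square_iff)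
  qed
  have "spec * Ent V m (\<lambda>x. (f' x)\<^sup>2) \<le> 10000 * E f'" by (rule MU0[OF card spos nn N1'])
  hence "spec * Ent V m (\<lambda>x. (f x)\<^sup>2) \<le> 10000 * E f'" by (simp only: Ent')
  thus ?thesis using E' by linarith
qed

theorem upper_dir: assumes card: "card V \<ge> 2" shows "spec \<le> 10000 * alpha"
proof (cases "spec > 0")
  case False
  thus ?thesis using alpha_nn[OF card] by simp
next
  case True
  have "spec / 10000 \<le> alpha"
  proof (rule alpha_ge[OF card])
    fix f assume N1: "N f = 1" and Ep: "Ent V m (\<lambda>x. (f x)\<^sup>2) > 0"
    have "spec * Ent V m (\<lambda>x. (f x)\<^sup>2) \<le> 10000 * E f" by (rule MU[OF card True N1])
    thus "spec / 10000 \<le> E f / Ent V m (\<lambda>x. (f x)\<^sup>2)" using Ep by (simp add: field_simps)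
  qed
  thus ?thesis by simp
qed

end

lemma main_both:
  assumes rc: "reversible_chain V P m" and card: "card V \<ge> 2"
  shows "1/8 * log_sobolev V P m \<le> alpha_spectral V P m \<and> alpha_spectral V P m \<le> 10000 * log_sobolev V P m"
proof -
  interpret rc V P m by (rule rc.intro[OF rc])
  show ?thesis using lower_dir[OF card] upper_dir[OF card] by simp
qed

theorem corollary3p4:
  shows "\<exists>c C :: real. c > 0 \<and> C > 0 \<and>
    (\<forall>(V :: nat set) P m. reversible_chain V P m \<longrightarrow> card V \<ge> 2 \<longrightarrow>
       c * log_sobolev V P m \<le> alpha_spectral V P m \<and>
       alpha_spectral V P m \<le> C * log_sobolev V P m)"
proof -
  have "\<forall>(V :: nat set) P m. reversible_chain V P m \<longrightarrow> card V \<ge> 2 \<longrightarrow>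
       (1/8::real) * log_sobolev V P m \<le> alpha_spectral V P m \<and>
       alpha_spectral V P m \<le> 10000 * log_sobolev V P m"
    using main_both by blast
  moreover have "(1/8::real) > 0" "(10000::real) > 0" by simp_all
  ultimately show ?thesis by blast
qed



end
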